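(* Let $\mathbf{P}=\{p_n(x)\}_{n\ge0}$ be the Sheffer sequence for the pair $(g(t),f(t))$. Then, as formal power series in $t$ (with coefficients rational functions of $x$), $$\sum_{n=0}^{\infty}A_n(x;\mathbf{P})\frac{t^n}{n!}=\frac{(1-x)\,e^{\bar f((1-x)t)}}{g\big(\bar f((1-x)t)\big)}\cdot\frac{1}{1-x\,e^{\bar f((1-x)t)}}.$$
   Context: $g,f$ are formal power series over $\mathbb{C}$ with $g(0)\ne0$, $f(0)=0$, $f'(0)\ne0$; $\bar f$ is the compositional inverse of $f$. $\{p_n\}$ is Sheffer for $(g,f)$ iff $\sum_{n\ge0}p_n(x)\frac{t^n}{n!}=\frac{1}{g(\bar f(t))}e^{x\bar f(t)}$. The Eulerian numbers $A_{n,k}(\mathbf{P})$ ($0\le k\le n$) are the unique coefficients with $p_n(x)=\sum_{k=0}^{n}A_{n,k}(\mathbf{P})\binom{x+n-k-1}{n}$, where $\binom{y}{n}=y(y-1)\cdots(y-n+1)/n!$, and $A_n(x;\mathbf{P})=\sum_{k=0}^n A_{n,k}(\mathbf{P})x^k$. *)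

theory Defs
  imports "HOL-Computational_Algebra.Computational_Algebra"
begin

text \<open>The identity is required for every complex value of x,
  which (coefficientwise) is the same as an identity of polynomials in x.\<close>
definition sheffer :: "complex fps \<Rightarrow> complex fps \<Rightarrow> (nat \<Rightarrow> complex poly) \<Rightarrow> bool" where
  "sheffer g f p \<longleftrightarrow>
     (\<forall>x::complex. Abs_fps (\<lambda>n. poly (p n) x / of_nat (fact n))
        = inverse (g oo fps_inv f) * (fps_exp x oo fps_inv f))"

definition eulerian :: "(nat \<Rightarrow> complex poly) \<Rightarrow> nat \<Rightarrow> nat \<Rightarrow> complex" where
  "eulerian p n =
     (THE a. (\<forall>k>n. a k = 0) \<and>
        (\<forall>x::complex. poly (p n) x =
           (\<Sum>k\<le>n. a k * ((x + of_nat n - of_nat k - 1) gchoose n))))"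

definition eulerian_poly :: "(nat \<Rightarrow> complex poly) \<Rightarrow> nat \<Rightarrow> complex poly" where
  "eulerian_poly p n = (\<Sum>k\<le>n. monom (eulerian p n k) k)"

type_synonym ratfun = "complex poly fract"

definition ratfun_x :: ratfun where
  "ratfun_x = to_fract [:0, 1:]"

definition lift_fps :: "complex fps \<Rightarrow> ratfun fps" where
  "lift_fps a = Abs_fps (\<lambda>n. to_fract [:a $ n:])"

end

theory Submission
  imports Defs
begin


definition fmap :: "('a \<Rightarrow> 'b) \<Rightarrow> 'a fps \<Rightarrow> 'b fps" where
  "fmap h a = Abs_fps (\<lambda>n. h (a $ n))"

lemma fmap_nth[simp]: "fmap h a $ n = h (a $ n)"
  by (simp add: fmap_def)

locale chom =
  fixes h :: "'a::comm_ring_1 \<Rightarrow> 'b::comm_ring_1"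
  assumes hadd: "\<And>x y. h (x + y) = h x + h y"
    and hmult: "\<And>x y. h (x * y) = h x * h y"
    and h0: "h 0 = 0" and h1: "h 1 = 1"
begin

lemma hsum: "h (sum f A) = (\<Sum>x\<in>A. h (f x))"
  by (induction A rule: infinite_finite_induct) (auto simp: h0 hadd)

lemma hdiff: "h (x - y) = h x - h y"
proof -
  have "h (x - y) + h y = h x" by (metis hadd diff_add_cancel)
  thus ?thesis by (simp add: eq_diff_eq)
qed

lemma hpow: "h (x ^ n) = h x ^ n"
  by (induction n) (auto simp: h1 hmult)

lemma hof_nat: "h (of_nat m) = of_nat m"
  by (induction m) (auto simp: h0 h1 hadd)

lemma fmap_mult: "fmap h (a * b) = fmap h a * fmap h b"
  by (simp add: fps_eq_iff fps_mult_nth hsum hmult)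

lemma fmap_add: "fmap h (a + b) = fmap h a + fmap h b"
  by (simp add: fps_eq_iff hadd)

lemma fmap_diff: "fmap h (a - b) = fmap h a - fmap h b"
  by (simp add: fps_eq_iff hdiff)

lemma fmap_1: "fmap h 1 = 1"
  by (simp add: fps_eq_iff h0 h1 fps_one_nth)

lemma fmap_const: "fmap h (fps_const c) = fps_const (h c)"
  by (simp add: fps_eq_iff h0)

lemma fmap_X: "fmap h fps_X = fps_X"
  by (simp add: fps_eq_iff h0 h1 fps_X_nth)

lemma fmap_power: "fmap h (a ^ n) = fmap h a ^ n"
  by (induction n) (auto simp: fmap_1 fmap_mult)

lemma fmap_compose: "fmap h (a oo b) = fmap h a oo fmap h b"
  by (simp add: fps_eq_iff fps_compose_nth hsum hmult flip: fmap_power)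

end



lemma sheffer_coeff:
  assumes "sheffer g f p"
  shows "poly (p n) y / of_nat (fact n) = (inverse (g oo fps_inv f) * (fps_exp y oo fps_inv f)) $ n"
proof -
  have "Abs_fps (\<lambda>n. poly (p n) y / of_nat (fact n)) = inverse (g oo fps_inv f) * (fps_exp y oo fps_inv f)"
    using assms unfolding sheffer_def by blast
  from arg_cong[where f="\<lambda>a. a $ n", OF this] show ?thesis by simp
qed

lemma deg_p:
  assumes "sheffer g f p"
  shows "degree (p n) \<le> n"
proof -
  define fb where "fb = fps_inv f"
  define c where "c = inverse (g oo fb)"
  define R where "R = smult (fact n) (\<Sum>i=0..n. smult (c$i) (\<Sum>j=0..n-i. monom ((fb^j)$(n-i) / fact j) j))"
  have "poly (p n) y = poly R y" for y
  proof -
    have "poly (p n) y = fact n * (c * (fps_exp y oo fb)) $ n"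
      using sheffer_coeff[OF assms, of n y] unfolding c_def fb_def
      by (simp add: field_simps)
    also have "\<dots> = poly R y"
      unfolding R_def
      by (simp add: fps_mult_nth fps_compose_nth poly_sum poly_monom sum_distrib_left
            mult_ac)
    finally show ?thesis .
  qed
  hence "p n = R" using poly_eq_poly_eq_iff by blast
  moreover have "degree R \<le> n"
    unfolding R_def
    by (intro order.trans[OF degree_smult_le] degree_sum_le order.trans[OF degree_smult_le]
         order.trans[OF degree_monom_le]) auto
  ultimately show ?thesis by simp
qed

definition bpoly :: "nat \<Rightarrow> nat \<Rightarrow> complex poly" where
  "bpoly n k = smult (inverse (fact n)) (\<Prod>i=0..<n. [:of_nat n - of_nat k - 1 - of_nat i, 1:])"

lemma poly_bpoly: "poly (bpoly n k) y = (y + of_nat n - of_nat k - 1) gchoose n"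
  unfolding bpoly_def gbinomial_prod_rev
  by (simp add: poly_prod field_simps)

lemma degree_bpoly: "degree (bpoly n k) \<le> n"
proof -
  have "degree (\<Prod>i=0..<n. [:of_nat n - of_nat k - 1 - of_nat i, 1::complex:]) \<le> (\<Sum>i=0..<n. degree [:of_nat n - of_nat k - 1 - of_nat i, 1::complex:])"
    using degree_prod_sum_le[of "{0..<n}" "\<lambda>i. [:of_nat n - of_nat k - 1 - of_nat i, 1::complex:]"]
    by (simp add: o_def)
  also have "\<dots> = n" by simp
  finally show ?thesis unfolding bpoly_def by (meson degree_smult_le order.trans)
qed

lemma evalb:
  assumes "i \<le> n"
  shows "(of_nat (j+1) + of_nat n - of_nat i - 1 :: complex) gchoose n = of_nat ((j+n-i) choose n)"
proof -
  have "(of_nat (j+1) + of_nat n - of_nat i - 1 :: complex) = of_nat (j+n-i)"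
    using assms by (simp add: of_nat_diff)
  thus ?thesis by (simp add: binomial_gbinomial)
qed

lemma interp_exists:
  fixes q :: "complex poly"
  assumes dq: "degree q \<le> n"
  shows "\<exists>a. (\<forall>k>n. a k = 0) \<and>
     (\<forall>y. poly q y = (\<Sum>k\<le>n. a k * ((y + of_nat n - of_nat k - 1) gchoose n)))"
proof -
  have "\<forall>m\<le>Suc n. \<exists>a. (\<forall>k\<ge>m. a k = 0) \<and>
      (\<forall>j<m. (\<Sum>i\<le>n. a i * of_nat ((j+n-i) choose n)) = poly q (of_nat (j+1)))"
  proof (intro allI impI)
    fix m assume "m \<le> Suc n"
    then show "\<exists>a. (\<forall>k\<ge>m. a k = 0) \<and>
      (\<forall>j<m. (\<Sum>i\<le>n. a i * of_nat ((j+n-i) choose n)) = poly q (of_nat (j+1)))"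
    proof (induction m)
      case 0
      show ?case by (rule exI[of _ "\<lambda>_. 0"]) simp
    next
      case (Suc m)
      then obtain a where a0: "\<forall>k\<ge>m. a k = 0"
        and aj: "\<forall>j<m. (\<Sum>i\<le>n. a i * of_nat ((j+n-i) choose n)) = poly q (of_nat (j+1))"
        by auto
      have mn: "m \<le> n" using Suc by simp
      define \<delta> where "\<delta> = poly q (of_nat (m+1)) - (\<Sum>i\<le>n. a i * of_nat ((m+n-i) choose n))"
      define a' where "a' = (\<lambda>i. a i + (if i = m then \<delta> else 0))"
      have sumeq: "(\<Sum>i\<le>n. a' i * of_nat ((j+n-i) choose n)) =
          (\<Sum>i\<le>n. a i * of_nat ((j+n-i) choose n)) + \<delta> * of_nat ((j+n-m) choose n)" for j
      proof -
        have "(\<Sum>i\<le>n. a' i * of_nat ((j+n-i) choose n)) =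
           (\<Sum>i\<le>n. a i * of_nat ((j+n-i) choose n)) + (\<Sum>i\<le>n. (if i = m then \<delta> * of_nat ((j+n-m) choose n) else 0))"
        proof -
          have "(\<Sum>i\<le>n. a' i * of_nat ((j+n-i) choose n)) = (\<Sum>i\<le>n. a i * of_nat ((j+n-i) choose n) + (if i = m then \<delta> * of_nat ((j+n-m) choose n) else 0))"
            by (intro sum.cong) (auto simp: a'_def distrib_right)
          thus ?thesis by (simp add: sum.distrib)
        qed
        also have "(\<Sum>i\<le>n. (if i = m then \<delta> * of_nat ((j+n-m) choose n) else 0)) = \<delta> * of_nat ((j+n-m) choose n)"
          using mn by (simp add: sum.delta)
        finally show ?thesis .
      qed
      show ?case
      proof (rule exI[of _ a'], intro conjI allI impI)
        fix k assume "Suc m \<le> k" thus "a' k = 0" using a0 unfolding a'_def by auto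
      next
        fix j assume "j < Suc m"
        show "(\<Sum>i\<le>n. a' i * of_nat ((j+n-i) choose n)) = poly q (of_nat (j+1))"
        proof (cases "j < m")
          case True
          have "j+n-m < n" using True mn by arith
          hence "(j+n-m) choose n = 0" by (simp add: binomial_eq_0)
          thus ?thesis using sumeq[of j] aj True by simp
        next
          case False
          hence "j = m" using \<open>j < Suc m\<close> by simp
          thus ?thesis using sumeq[of j] unfolding \<delta>_def by simp
        qed
      qed
    qed
  qed
  then obtain a where a0: "\<forall>k\<ge>Suc n. a k = 0"
    and aj: "\<forall>j<Suc n. (\<Sum>i\<le>n. a i * of_nat ((j+n-i) choose n)) = poly q (of_nat (j+1))"
    by blast
  define Q where "Q = (\<Sum>k\<le>n. smult (a k) (bpoly n k))"
  have polyQ: "poly Q y = (\<Sum>k\<le>n. a k * ((y + of_nat n - of_nat k - 1) gchoose n))" for y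
    unfolding Q_def by (simp add: poly_sum poly_bpoly)
  have dQ: "degree Q \<le> n"
    unfolding Q_def
    by (intro degree_sum_le order.trans[OF degree_smult_le] degree_bpoly) auto
  define A where "A = (\<lambda>j. of_nat (j+1) :: complex) ` {..n}"
  have cardA: "card A = Suc n"
    unfolding A_def by (subst card_image) (auto simp: inj_on_def)
  have "q = Q"
  proof (rule poly_eqI_degree[of A])
    fix x assume "x \<in> A"
    then obtain j where j: "j \<le> n" "x = of_nat (j+1)" unfolding A_def by auto
    have "poly Q x = (\<Sum>k\<le>n. a k * of_nat ((j+n-k) choose n))"
      unfolding polyQ j(2) by (intro sum.cong refl) (auto simp only: atMost_iff evalb)
    also have "\<dots> = poly q x" using aj j by simp
    finally show "poly q x = poly Q x" by simp
  qed (use cardA dq dQ in auto)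
  thus ?thesis using a0 polyQ by (intro exI[of _ a]) auto
qed

lemma interp_unique:
  assumes "\<forall>k>n. a k = 0" "\<forall>k>n. b k = 0"
    and "\<forall>y::complex. (\<Sum>k\<le>n. a k * ((y + of_nat n - of_nat k - 1) gchoose n)) =
                      (\<Sum>k\<le>n. b k * ((y + of_nat n - of_nat k - 1) gchoose n))"
  shows "a = b"
proof -
  define d where "d = (\<lambda>k. a k - b k)"
  have d0: "\<forall>y::complex. (\<Sum>k\<le>n. d k * ((y + of_nat n - of_nat k - 1) gchoose n)) = 0"
    using assms(3) unfolding d_def by (simp add: left_diff_distrib sum_subtractf)
  have "d k = 0" if "k \<le> n" for k
    using that
  proof (induction k rule: less_induct)
    case (less k)
    have "0 = (\<Sum>i\<le>n. d i * ((of_nat (k+1) + of_nat n - of_nat i - 1) gchoose n))"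
      by (rule d0[rule_format, symmetric])
    also have "\<dots> = (\<Sum>i\<le>n. if i = k then d k else 0)"
    proof (intro sum.cong refl)
      fix i assume "i \<in> {..n}"
      hence i: "i \<le> n" by simp
      show "d i * ((of_nat (k+1) + of_nat n - of_nat i - 1) gchoose n) = (if i = k then d k else 0)"
      proof (cases i k rule: linorder_cases)
        case less
        thus ?thesis using less.IH less.prems by simp
      next
        case equal
        have "(of_nat n :: complex) gchoose n = 1" by (metis binomial_gbinomial binomial_n_n of_nat_1)
        thus ?thesis using equal by (simp add: evalb i)
      next
        case greater
        hence "k+n-i < n" using i by arith
        hence "(k+n-i) choose n = 0" by (simp add: binomial_eq_0)
        hence "(of_nat (k+1) + of_nat n - of_nat i - 1 :: complex) gchoose n = 0"
          using evalb[OF i, of k] by simp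
        thus ?thesis using greater by simp
      qed
    qed
    also have "\<dots> = d k" using less.prems by simp
    finally show ?case by simp
  qed
  moreover have "d k = 0" if "k > n" for k using assms that unfolding d_def by simp
  ultimately have "\<forall>k. d k = 0" by (meson not_le)
  thus ?thesis unfolding d_def by auto
qed

lemma eulerian_char:
  assumes "sheffer g f p"
  shows "\<forall>k>n. eulerian p n k = 0"
    "\<And>y. poly (p n) y = (\<Sum>k\<le>n. eulerian p n k * ((y + of_nat n - of_nat k - 1) gchoose n))"
proof -
  let ?P = "\<lambda>a. (\<forall>k>n. a k = 0) \<and>
        (\<forall>x::complex. poly (p n) x = (\<Sum>k\<le>n. a k * ((x + of_nat n - of_nat k - 1) gchoose n)))"
  have ex: "\<exists>!a. ?P a"
  proof -
    obtain a where "?P a" using interp_exists[OF deg_p[OF assms]] by blast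
    moreover have "b = a" if "?P b" for b
      using interp_unique[of n b a] that \<open>?P a\<close> by auto
    ultimately show ?thesis by blast
  qed
  have "?P (eulerian p n)" unfolding eulerian_def using theI'[OF ex] .
  thus "\<forall>k>n. eulerian p n k = 0"
    "\<And>y. poly (p n) y = (\<Sum>k\<le>n. eulerian p n k * ((y + of_nat n - of_nat k - 1) gchoose n))"
    by auto
qed



abbreviation Xp :: "complex poly" where "Xp \<equiv> [:0, 1:]"

definition T :: "nat \<Rightarrow> nat \<Rightarrow> complex poly" where
  "T n M = (\<Sum>j<M. [:of_nat ((j+n) choose n):] * Xp^j)"

lemma T_Suc: "T n (Suc M) = T n M + [:of_nat ((M+n) choose n):] * Xp^M"
  by (simp add: T_def)

lemma L1: "(1 - Xp) * T 0 M = 1 - Xp^M"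
  by (induction M) (simp_all add: T_def algebra_simps)

lemma ringlem: "(t::'a::comm_ring_1) - b*x^M + (1-x)*(a+b)*x^M = (t + a*x^M) - (a+b)*x^(Suc M)"
  by (simp add: algebra_simps)

lemma L2: "(1 - Xp) * T (Suc n) M = T n M - [:of_nat ((M+n) choose (Suc n)):] * Xp^M"
proof (induction M)
  case 0 thus ?case by (simp add: T_def)
next
  case (Suc M)
  have pas: "[:of_nat ((Suc M + n) choose Suc n):] = [:of_nat ((M+n) choose n):] + [:of_nat ((M+n) choose Suc n) :: complex:]"
    by simp
  have "(1 - Xp) * T (Suc n) (Suc M) = (1 - Xp) * T (Suc n) M + (1 - Xp) * [:of_nat ((M + Suc n) choose Suc n):] * Xp^M"
    by (simp add: T_Suc algebra_simps)
  also have "\<dots> = T n M - [:of_nat ((M+n) choose (Suc n)):] * Xp^M + (1 - Xp) * [:of_nat ((Suc M + n) choose Suc n):] * Xp^M"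
    using Suc by simp
  also have "\<dots> = T n (Suc M) - [:of_nat ((Suc M+n) choose (Suc n)):] * Xp^(Suc M)"
    unfolding T_Suc pas by (rule ringlem)
  finally show ?case .
qed

lemma LB: "Xp^M dvd 1 - (1 - Xp)^(Suc n) * T n M"
proof (induction n)
  case 0 thus ?case by (simp add: L1)
next
  case (Suc n)
  have "1 - (1 - Xp)^(Suc (Suc n)) * T (Suc n) M = 1 - (1 - Xp)^(Suc n) * ((1 - Xp) * T (Suc n) M)"
    by (simp add: algebra_simps)
  also have "\<dots> = (1 - (1 - Xp)^(Suc n) * T n M) + Xp^M * ((1 - Xp)^(Suc n) * [:of_nat ((M+n) choose (Suc n)):])"
    unfolding L2 by (simp add: algebra_simps)
  finally have eq: "1 - (1 - Xp)^(Suc (Suc n)) * T (Suc n) M = (1 - (1 - Xp)^(Suc n) * T n M) + Xp^M * ((1 - Xp)^(Suc n) * [:of_nat ((M+n) choose (Suc n)):])" .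
  show ?case unfolding eq by (intro dvd_add Suc.IH dvd_triv_left)
qed

definition U :: "nat \<Rightarrow> nat \<Rightarrow> nat \<Rightarrow> complex poly" where
  "U n k N = (\<Sum>m<N. [:of_nat ((m+n-k) choose n):] * Xp^m)"

lemma U_small: "N \<le> k \<Longrightarrow> k \<le> n \<Longrightarrow> U n k N = 0"
  unfolding U_def
proof (intro sum.neutral ballI)
  fix m assume "N \<le> k" "k \<le> n" "m \<in> {..<N}"
  hence "m+n-k < n" by auto
  thus "[:of_nat ((m+n-k) choose n):] * Xp^m = 0" by (simp add: binomial_eq_0)
qed

lemma U_big: "k \<le> N \<Longrightarrow> k \<le> n \<Longrightarrow> U n k N = Xp^k * T n (N - k)"
proof (induction N rule: dec_induct)
  case base thus ?case using U_small[of k k n] by (simp add: T_def)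
next
  case (step N)
  have "U n k (Suc N) = U n k N + [:of_nat ((N+n-k) choose n):] * Xp^N"
    by (simp add: U_def)
  also have "\<dots> = Xp^k * T n (N - k) + [:of_nat ((N-k+n) choose n):] * (Xp^k * Xp^(N-k))"
    using step by (simp add: power_add[symmetric])
  also have "\<dots> = Xp^k * T n (Suc N - k)"
    using step by (simp add: Suc_diff_le T_Suc algebra_simps)
  finally show ?case .
qed

lemma LU:
  assumes "k \<le> n"
  shows "Xp^N dvd Xp^k - (1 - Xp)^(Suc n) * U n k N"
proof (cases "N \<le> k")
  case True thus ?thesis using U_small[OF True assms] by (simp add: le_imp_power_dvd)
next
  case False
  hence kN: "k \<le> N" by simp
  have "Xp^k - (1 - Xp)^(Suc n) * U n k N = Xp^k * (1 - (1 - Xp)^(Suc n) * T n (N - k))"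
    using U_big[OF kN assms] by (simp add: algebra_simps)
  moreover have "Xp^N = Xp^k * Xp^(N-k)" using kN by (simp add: power_add[symmetric])
  ultimately show ?thesis using LB by (simp add: mult_dvd_mono)
qed



interpretation cpoly: chom "\<lambda>z::complex. [:z:]"
  by unfold_locales simp_all

abbreviation cp :: "complex poly" where "cp \<equiv> 1 - Xp"

definition Sc :: "complex fps \<Rightarrow> complex poly fps" where
  "Sc a = fmap (\<lambda>z. [:z:]) a oo (fps_const cp * fps_X)"

lemma Sc_nth: "Sc a $ n = cp^n * [:a $ n:]"
  by (simp add: Sc_def fps_compose_linear)

lemma Sc_mult: "Sc (a * b) = Sc a * Sc b"
  unfolding Sc_def cpoly.fmap_mult by (rule fps_compose_mult_distrib) simp

lemma Sc_power: "Sc (a ^ m) = Sc a ^ m"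
  unfolding Sc_def cpoly.fmap_power by (rule fps_compose_power[symmetric]) simp

lemma fb0: "fps_inv f $ 0 = 0"
  by (simp add: fps_inv_def)

lemma ringlem2: "((s::'a::comm_ring_1) + c*x^N*q)*G*(1-x*E) = s*G*(1-x*E) + c*x^N*(q*G)*(1-x*E)"
  by (simp add: algebra_simps)
lemma ringlem3: "(c::'a::comm_ring_1)*E - c*x^N*E^(Suc N) + c*x^N*E^(Suc N)*(1-x*E) = c*E - c*x^(Suc N)*E^(Suc(Suc N))"
  by (simp add: algebra_simps)

lemma Xp_pow_dvd_zero:
  assumes "\<forall>N. Xp^N dvd q"
  shows "q = 0"
proof (rule ccontr)
  assume "q \<noteq> 0"
  hence "degree (Xp ^ Suc (degree q)) \<le> degree q"
    using assms dvd_imp_degree_le by blast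
  moreover have "degree (Xp ^ Suc (degree q)) = Suc (degree q)"
    by (subst degree_power_eq) auto
  ultimately show False by simp
qed

locale shef_setup =
  fixes g f :: "complex fps" and p :: "nat \<Rightarrow> complex poly"
  assumes g0: "g $ 0 \<noteq> 0" and shef: "sheffer g f p"
begin

definition "fb = fps_inv f"
definition "e = fps_exp 1 oo fb"
definition "gf = g oo fb"
definition "P m = Abs_fps (\<lambda>n. poly (p n) (of_nat m) / of_nat (fact n))"
definition "Ep = Sc e"
definition "Gp = Sc gf"
definition "S N = (\<Sum>m<N. fps_const (cp * Xp^m) * Sc (P (Suc m)))"
definition "Lp = Abs_fps (\<lambda>n. smult (inverse (fact n)) (eulerian_poly p n))"

lemma P_gf: "P m * gf = e ^ m"
proof -
  have "P m = inverse gf * (fps_exp (of_nat m) oo fb)"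
    using shef unfolding sheffer_def P_def gf_def fb_def by blast
  moreover have "fps_exp (of_nat m :: complex) = fps_exp 1 ^ m"
    by (simp add: fps_exp_power_mult)
  moreover have "(fps_exp 1 ^ m oo fb) = e ^ m"
    unfolding e_def by (rule fps_compose_power[symmetric]) (simp add: fb_def fb0)
  moreover have "inverse gf * gf = 1"
    using g0 by (intro inverse_mult_eq_1) (simp add: gf_def)
  ultimately show ?thesis by (metis mult.assoc mult.commute mult_1_right)
qed

lemma ScP: "Sc (P m) * Gp = Ep ^ m"
  unfolding Gp_def Ep_def by (simp flip: Sc_mult Sc_power add: P_gf)

lemma S_tele: "S N * Gp * (1 - fps_const Xp * Ep) = fps_const cp * Ep - fps_const cp * fps_const Xp ^ N * Ep ^ (Suc N)"
proof (induction N)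
  case 0 thus ?case by (simp add: S_def)
next
  case (Suc N)
  have S1: "S (Suc N) = S N + fps_const cp * fps_const Xp ^ N * Sc (P (Suc N))"
    by (simp add: S_def fps_const_power flip: fps_const_mult)
  show ?case unfolding S1 ringlem2 Suc ScP by (rule ringlem3)
qed


lemma pval: "poly (p n) (of_nat (Suc m)) = (\<Sum>k\<le>n. eulerian p n k * of_nat ((m+n-k) choose n))"
proof -
  have "poly (p n) (of_nat (m+1)) = (\<Sum>k\<le>n. eulerian p n k * ((of_nat (m+1) + of_nat n - of_nat k - 1) gchoose n))"
    by (rule eulerian_char(2)[OF shef])
  also have "\<dots> = (\<Sum>k\<le>n. eulerian p n k * of_nat ((m+n-k) choose n))"
    by (intro sum.cong refl) (auto simp only: atMost_iff evalb)
  finally show ?thesis by simp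
qed

lemma LS_coeff:
  "(Lp - S N) $ n = smult (inverse (fact n)) (\<Sum>k\<le>n. smult (eulerian p n k) (Xp^k - cp^(Suc n) * U n k N))"
proof (rule poly_eq_poly_eq_iff[THEN iffD1], rule ext)
  fix y :: complex
  let ?a = "eulerian p n"
  have "poly ((Lp - S N) $ n) y = inverse (fact n) * (\<Sum>k\<le>n. ?a k * y^k)
     - (\<Sum>m<N. (1-y) * y^m * ((1-y)^n * (poly (p n) (of_nat (Suc m)) / fact n)))"
    by (simp add: Lp_def S_def P_def fps_sum_nth Sc_nth eulerian_poly_def poly_sum poly_monom sum_divide_distrib mult_ac)
  also have "(\<Sum>m<N. (1-y) * y^m * ((1-y)^n * (poly (p n) (of_nat (Suc m)) / fact n)))
      = (\<Sum>m<N. \<Sum>k\<le>n. inverse (fact n) * (?a k * ((1-y)^(Suc n) * (of_nat ((m+n-k) choose n) * y^m))))"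
    unfolding pval by (intro sum.cong refl) (simp add: sum_distrib_left sum_divide_distrib field_simps)
  also have "\<dots> = (\<Sum>k\<le>n. \<Sum>m<N. inverse (fact n) * (?a k * ((1-y)^(Suc n) * (of_nat ((m+n-k) choose n) * y^m))))"
    by (rule sum.swap)
  also have "inverse (fact n) * (\<Sum>k\<le>n. ?a k * y^k) - \<dots> =
      poly (smult (inverse (fact n)) (\<Sum>k\<le>n. smult (?a k) (Xp^k - cp^(Suc n) * U n k N))) y"
    by (simp add: poly_sum U_def sum_distrib_left right_diff_distrib sum_subtractf mult_ac)
  finally show "poly ((Lp - S N) $ n) y = poly (smult (inverse (fact n)) (\<Sum>k\<le>n. smult (eulerian p n k) (Xp^k - cp^(Suc n) * U n k N))) y" .
qed

lemma LS_dvd: "Xp^N dvd (Lp - S N) $ n"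
  unfolding LS_coeff by (intro dvd_smult dvd_sum LU) auto


lemma poly_identity: "Lp * Gp * (1 - fps_const Xp * Ep) = fps_const cp * Ep"
proof -
  let ?B = "Gp * (1 - fps_const Xp * Ep)"
  have eq: "Lp * Gp * (1 - fps_const Xp * Ep) - fps_const cp * Ep =
      (Lp - S N) * ?B - fps_const cp * fps_const Xp ^ N * Ep ^ (Suc N)" for N
    using S_tele[of N] by (simp add: algebra_simps)
  have "(Lp * Gp * (1 - fps_const Xp * Ep) - fps_const cp * Ep) $ n = 0" for n
  proof (rule Xp_pow_dvd_zero, rule allI)
    fix N
    have "Xp^N dvd ((Lp - S N) * ?B) $ n"
      unfolding fps_mult_nth by (intro dvd_sum dvd_mult2 LS_dvd)
    moreover have "Xp^N dvd (fps_const cp * fps_const Xp ^ N * Ep ^ (Suc N)) $ n"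
      by (simp add: fps_const_power)
    ultimately show "Xp^N dvd (Lp * Gp * (1 - fps_const Xp * Ep) - fps_const cp * Ep) $ n"
      unfolding eq[of N] fps_sub_nth by (rule dvd_diff)
  qed
  thus ?thesis by (simp add: fps_eq_iff)
qed

end



interpretation tfr: chom "to_fract :: complex poly \<Rightarrow> ratfun"
  by unfold_locales simp_all

interpretation cfr: chom "\<lambda>z::complex. (to_fract [:z:] :: ratfun)"
proof
  fix x y :: complex
  show "(to_fract [:x + y:] :: ratfun) = to_fract [:x:] + to_fract [:y:]"
    by (simp only: cpoly.hadd to_fract_add)
  show "(to_fract [:x * y:] :: ratfun) = to_fract [:x:] * to_fract [:y:]"
    by (simp only: cpoly.hmult to_fract_mult)
  show "(to_fract [:0:] :: ratfun) = 0" by (simp only: cpoly.h0 to_fract_0)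
  show "(to_fract [:1:] :: ratfun) = 1" by (simp only: cpoly.h1 to_fract_1)
qed

lemma cfr_of_nat: "(to_fract [:of_nat m :: complex:] :: ratfun) = of_nat m"
  by (metis of_nat_poly tfr.hof_nat)

lemma cfr_inverse: "(to_fract [:inverse z:] :: ratfun) = inverse (to_fract [:z:])"
proof (cases "z = 0")
  case True thus ?thesis by simp
next
  case False
  have iz: "z * inverse z = 1" using False by simp
  have "(to_fract [:z:] :: ratfun) * to_fract [:inverse z:] = to_fract [:z * inverse z:]"
    by (rule cfr.hmult[symmetric])
  also have "\<dots> = 1" by (simp only: iz cfr.h1)
  finally have "(to_fract [:z:] :: ratfun) * to_fract [:inverse z:] = 1" .
  from inverse_unique[OF this] show ?thesis by (rule sym)
qed

lemma lift_fmap: "lift_fps a = fmap (\<lambda>z. to_fract [:z:]) a"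
  by (simp add: lift_fps_def fmap_def)

lemma lift_exp: "lift_fps (fps_exp 1) = fps_exp 1"
proof -
  have "(to_fract [:1 / of_nat (fact n):] :: ratfun) = 1 / of_nat (fact n)" for n
    by (simp only: divide_inverse mult_1_left cfr_inverse cfr_of_nat)
  thus ?thesis by (simp add: fps_eq_iff lift_fps_def)
qed

lemma lift_compose: "lift_fps (a oo b) = lift_fps a oo lift_fps b"
  unfolding lift_fmap by (rule cfr.fmap_compose)

lemma tf_Sc: "fmap to_fract (Sc a) = lift_fps a oo (fps_const (1 - ratfun_x) * fps_X)"
  unfolding Sc_def tfr.fmap_compose tfr.fmap_mult tfr.fmap_const tfr.fmap_X
  by (simp add: lift_fmap ratfun_x_def fmap_def)



theorem theorem3p3:
  fixes g f :: "complex fps" and p :: "nat \<Rightarrow> complex poly"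
  assumes g0: "g $ 0 \<noteq> 0"
    and f0: "f $ 0 = 0"
    and f1: "f $ 1 \<noteq> 0"
    and shef: "sheffer g f p"
  shows "Abs_fps (\<lambda>n. to_fract (eulerian_poly p n) / of_nat (fact n))
       = (let F = lift_fps (fps_inv f) oo (fps_const (1 - ratfun_x) * fps_X);
              E = fps_exp 1 oo F
          in fps_const (1 - ratfun_x) * E * inverse (lift_fps g oo F)
             * inverse (1 - fps_const ratfun_x * E))"
proof -
  interpret S: shef_setup g f p using g0 shef by unfold_locales
  define K where "K = fps_const (1 - ratfun_x) * fps_X"
  define F where "F = lift_fps (fps_inv f) oo K"
  define E where "E = fps_exp 1 oo F"
  define G where "G = lift_fps g oo F"
  define L where "L = Abs_fps (\<lambda>n. to_fract (eulerian_poly p n) / of_nat (fact n) :: ratfun)"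
  define Q where "Q = 1 - fps_const ratfun_x * E"
  have K0: "K $ 0 = 0" by (simp add: K_def)
  have lfb0: "lift_fps (fps_inv f) $ 0 = 0" by (simp add: lift_fps_def fb0)
  have EE: "E = fmap to_fract S.Ep"
    unfolding S.Ep_def tf_Sc S.e_def lift_compose lift_exp E_def F_def K_def S.fb_def
    by (rule fps_compose_assoc) (use K0 lfb0 in \<open>simp_all add: K_def\<close>)
  have GG: "G = fmap to_fract S.Gp"
    unfolding S.Gp_def tf_Sc S.gf_def lift_compose G_def F_def K_def S.fb_def
    by (rule fps_compose_assoc) (use K0 lfb0 in \<open>simp_all add: K_def\<close>)
  have LL: "L = fmap to_fract S.Lp"
  proof -
    have "to_fract (smult (inverse (fact n)) A) = to_fract A / (of_nat (fact n) :: ratfun)" for n and A :: "complex poly"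
    proof -
      have "to_fract (smult (inverse (fact n)) A) = to_fract [:inverse (fact n):] * to_fract A"
        by (simp flip: to_fract_mult)
      also have "to_fract [:inverse (fact n) :: complex:] = inverse (of_nat (fact n) :: ratfun)"
      proof -
        have "(fact n :: complex) = of_nat (fact n)" by simp
        thus ?thesis by (simp only: cfr_inverse cfr_of_nat)
      qed
      finally show ?thesis by (simp only: divide_inverse mult.commute)
    qed
    thus ?thesis by (simp add: L_def S.Lp_def fps_eq_iff)
  qed
  have key: "L * G * Q = fps_const (1 - ratfun_x) * E"
  proof -
    have "fmap to_fract (S.Lp * S.Gp * (1 - fps_const Xp * S.Ep)) = fmap to_fract (fps_const cp * S.Ep)"
      by (simp only: S.poly_identity)
    thus ?thesis
      unfolding tfr.fmap_mult tfr.fmap_diff tfr.fmap_1 tfr.fmap_const EE GG LL Q_def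
      by (simp add: ratfun_x_def)
  qed
  have G0: "G $ 0 \<noteq> 0" using g0 by (simp add: G_def lift_fps_def)
  have xne1: "ratfun_x \<noteq> 1"
  proof
    assume "ratfun_x = 1"
    hence "to_fract [:0, 1::complex:] = to_fract 1" by (simp add: ratfun_x_def)
    hence "[:0, 1::complex:] = 1" by (metis to_fract_eq_iff to_fract_1)
    thus False by (simp add: one_pCons)
  qed
  have Q0: "Q $ 0 \<noteq> 0"
    using xne1 by (simp add: Q_def E_def F_def)
  have "L = L * G * Q * inverse G * inverse Q"
    using G0 Q0 by (simp add: inverse_mult_eq_1' mult.assoc mult.left_commute[of G])
  also have "\<dots> = fps_const (1 - ratfun_x) * E * inverse G * inverse Q" by (simp only: key)
  finally show ?thesis unfolding Let_def L_def Q_def G_def E_def F_def K_def .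
qed

end
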